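(* Let $G$ be a finite Coxeter group with Coxeter generators $s_1,\dots,s_n$ and Coxeter matrix $(m_{i,j})$, acting on a set $S$. Suppose $v_1,\dots,v_n\in S$ satisfy: (1) if $m_{i,j}=2k+1$ then $[s_is_j\cdots]_{2k}(v_i)=v_j$; (2) if $m_{i,j}=2k$ then $[s_is_j\cdots]_{2k-1}(v_j)=v_j$; (3) if $m_{i,j}=2$ then $s_i(v_j)=v_j$; (4) $s_i(v_i)=v_i$ for all $i$. Then for all $w\in G$ and all $i,j$, $ws_iw^{-1}=s_j$ implies $w(v_i)=v_j$.
   Context: $[s_is_j\cdots]_k$ denotes the word of length $k$ beginning with $s_i$ in which $s_i$ and $s_j$ alternate. The Coxeter group has presentation $\langle s_1,\dots,s_n\mid s_i^2=1,\ [s_is_j\cdots]_{m_{i,j}}=[s_js_i\cdots]_{m_{i,j}}\ (i\ne j)\rangle$. *)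

theory Defs
  imports "HOL-Algebra.Group_Action"
begin

text \<open>Indices of the Coxeter generators are 0..<n (instead of 1..n).\<close>

fun alt_word :: "nat \<Rightarrow> nat \<Rightarrow> nat \<Rightarrow> nat list" where
  "alt_word i j 0 = []"
| "alt_word i j (Suc k) = i # alt_word j i k"

fun word_eval :: "('a, 'c) monoid_scheme \<Rightarrow> (nat \<Rightarrow> 'a) \<Rightarrow> nat list \<Rightarrow> 'a" where
  "word_eval G s [] = \<one>\<^bsub>G\<^esub>"
| "word_eval G s (i # w) = s i \<otimes>\<^bsub>G\<^esub> word_eval G s w"

definition coxeter_matrix :: "nat \<Rightarrow> (nat \<Rightarrow> nat \<Rightarrow> nat) \<Rightarrow> bool" where
  "coxeter_matrix n m \<longleftrightarrow>
     (\<forall>i<n. m i i = 1) \<and> (\<forall>i<n. \<forall>j<n. m i j = m j i) \<and>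
     (\<forall>i<n. \<forall>j<n. i \<noteq> j \<longrightarrow> m i j \<ge> 2)"

inductive cox_equiv :: "nat \<Rightarrow> (nat \<Rightarrow> nat \<Rightarrow> nat) \<Rightarrow> nat list \<Rightarrow> nat list \<Rightarrow> bool"
  for n m where
  refl: "cox_equiv n m u u"
| sym: "cox_equiv n m u v \<Longrightarrow> cox_equiv n m v u"
| trans: "cox_equiv n m u v \<Longrightarrow> cox_equiv n m v w \<Longrightarrow> cox_equiv n m u w"
| ctxt: "cox_equiv n m u v \<Longrightarrow> cox_equiv n m (a @ u @ b) (a @ v @ b)"
| square: "i < n \<Longrightarrow> cox_equiv n m [i, i] []"
| braid: "i < n \<Longrightarrow> j < n \<Longrightarrow> cox_equiv n m (alt_word i j (m i j)) (alt_word j i (m i j))"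

text \<open>(G, s_0..s_(n-1)) is a Coxeter system with Coxeter matrix m: G is a group
  generated by the s_i, and two words in the s_i are equal in G iff they are
  equivalent under the Coxeter relations (i.e. G has the Coxeter presentation;
  since all generators are involutions, the monoid presentation equals the group one).\<close>
definition coxeter_system :: "('a, 'c) monoid_scheme \<Rightarrow> nat \<Rightarrow> (nat \<Rightarrow> nat \<Rightarrow> nat) \<Rightarrow> (nat \<Rightarrow> 'a) \<Rightarrow> bool" where
  "coxeter_system G n m s \<longleftrightarrow>
     group G \<and> coxeter_matrix n m \<and> (\<forall>i<n. s i \<in> carrier G) \<and>
     carrier G = {word_eval G s w | w. set w \<subseteq> {..<n}} \<and>
     (\<forall>u v. set u \<subseteq> {..<n} \<longrightarrow> set v \<subseteq> {..<n} \<longrightarrow>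
        (word_eval G s u = word_eval G s v \<longleftrightarrow> cox_equiv n m u v))"

end

theory Submission
  imports Defs Complex_Main
begin


locale coxsys =
  fixes G :: "('a, 'c) monoid_scheme" (structure) and n :: nat and m :: "nat \<Rightarrow> nat \<Rightarrow> nat"
    and s :: "nat \<Rightarrow> 'a"
  assumes cs: "coxeter_system G n m s"
begin

lemma grp: "group G" using cs unfolding coxeter_system_def by blast

sublocale group G by (rule grp)

lemma cm: "coxeter_matrix n m" using cs unfolding coxeter_system_def by blast
lemma m_diag: "i < n \<Longrightarrow> m i i = 1" using cm unfolding coxeter_matrix_def by blast
lemma m_sym: "i < n \<Longrightarrow> j < n \<Longrightarrow> m i j = m j i" using cm unfolding coxeter_matrix_def by blast
lemma m_ge2: "i < n \<Longrightarrow> j < n \<Longrightarrow> i \<noteq> j \<Longrightarrow> 2 \<le> m i j"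
  using cm unfolding coxeter_matrix_def by blast
lemma s_car[simp]: "i < n \<Longrightarrow> s i \<in> carrier G" using cs unfolding coxeter_system_def by blast
lemma car_eq: "carrier G = {word_eval G s w | w. set w \<subseteq> {..<n}}"
  using cs unfolding coxeter_system_def by blast
lemma we_iff: "set u \<subseteq> {..<n} \<Longrightarrow> set v \<subseteq> {..<n} \<Longrightarrow>
   (word_eval G s u = word_eval G s v) = cox_equiv n m u v"
  using cs unfolding coxeter_system_def by blast

lemma we_car[simp]: "set u \<subseteq> {..<n} \<Longrightarrow> word_eval G s u \<in> carrier G"
  by (induction u) auto

lemma we_app: "set u \<subseteq> {..<n} \<Longrightarrow> set v \<subseteq> {..<n} \<Longrightarrow>
   word_eval G s (u @ v) = word_eval G s u \<otimes> word_eval G s v"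
  by (induction u) (auto simp: m_assoc)

lemma we_single[simp]: "i < n \<Longrightarrow> word_eval G s [i] = s i" by simp

lemma car_word: "g \<in> carrier G \<Longrightarrow> \<exists>u. set u \<subseteq> {..<n} \<and> word_eval G s u = g"
  by (subst (asm) car_eq) blast

lemma ss[simp]: "i < n \<Longrightarrow> s i \<otimes> s i = \<one>"
proof -
  assume i: "i < n"
  have "cox_equiv n m [i, i] []" using i by (rule cox_equiv.square)
  hence "word_eval G s [i,i] = word_eval G s []" using we_iff[of "[i,i]" "[]"] i by simp
  thus ?thesis using i by simp
qed

lemma ss2: "i < n \<Longrightarrow> g \<in> carrier G \<Longrightarrow> g \<otimes> s i \<otimes> s i = g"
  by (simp add: m_assoc)
lemma ss3: "i < n \<Longrightarrow> g \<in> carrier G \<Longrightarrow> s i \<otimes> (s i \<otimes> g) = g"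
  by (simp add: m_assoc[symmetric])

lemma inv_s[simp]: "i < n \<Longrightarrow> inv (s i) = s i"
  using inv_equality[of "s i" "s i"] by simp

lemma length_alt[simp]: "length (alt_word i j k) = k"
  by (induction k arbitrary: i j) auto

lemma cox_parity: "cox_equiv n m u v \<Longrightarrow> even (length u) = even (length v)"
  by (induction rule: cox_equiv.induct) auto

definition len :: "'a \<Rightarrow> nat" where
  "len g = (LEAST p. \<exists>u. set u \<subseteq> {..<n} \<and> length u = p \<and> word_eval G s u = g)"

lemma len_ex: "g \<in> carrier G \<Longrightarrow> \<exists>u. set u \<subseteq> {..<n} \<and> length u = len g \<and> word_eval G s u = g"
  unfolding len_def by (rule LeastI_ex) (use car_word in blast)

lemma len_le: "set u \<subseteq> {..<n} \<Longrightarrow> len (word_eval G s u) \<le> length u"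
  unfolding len_def by (rule Least_le) blast

lemma len_par: "set u \<subseteq> {..<n} \<Longrightarrow> even (len (word_eval G s u)) = even (length u)"
proof -
  assume u: "set u \<subseteq> {..<n}"
  obtain v where v: "set v \<subseteq> {..<n}" "length v = len (word_eval G s u)" "word_eval G s v = word_eval G s u"
    using len_ex[of "word_eval G s u"] u by auto
  have "cox_equiv n m v u" using we_iff[OF v(1) u] v(3) by simp
  thus ?thesis using cox_parity v(2) by metis
qed

lemma len_mult: "g \<in> carrier G \<Longrightarrow> h \<in> carrier G \<Longrightarrow> len (g \<otimes> h) \<le> len g + len h"
proof -
  assume g: "g \<in> carrier G" and h: "h \<in> carrier G"
  obtain u where u: "set u \<subseteq> {..<n}" "length u = len g" "word_eval G s u = g" using len_ex[OF g] by blast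
  obtain v where v: "set v \<subseteq> {..<n}" "length v = len h" "word_eval G s v = h" using len_ex[OF h] by blast
  have "g \<otimes> h = word_eval G s (u @ v)" using we_app u v by simp
  moreover have "set (u@v) \<subseteq> {..<n}" using u v by auto
  ultimately show ?thesis using len_le[of "u@v"] u v by simp
qed

lemma len_one[simp]: "len \<one> = 0"
  using len_le[of "[]"] by simp

lemma len0: "g \<in> carrier G \<Longrightarrow> len g = 0 \<Longrightarrow> g = \<one>"
  using len_ex by fastforce

lemma len_sa: "g \<in> carrier G \<Longrightarrow> a < n \<Longrightarrow> len (g \<otimes> s a) = Suc (len g) \<or> len g = Suc (len (g \<otimes> s a))"
proof -
  assume g: "g \<in> carrier G" and a: "a < n"
  obtain u where u: "set u \<subseteq> {..<n}" "length u = len g" "word_eval G s u = g" using len_ex[OF g] by blast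
  have e: "g \<otimes> s a = word_eval G s (u @ [a])" using we_app[of u "[a]"] u a by simp
  have p: "even (len (g \<otimes> s a)) = odd (len g)"
    using len_par[of "u@[a]"] len_par[of u] u a e by simp
  have l1: "len (g \<otimes> s a) \<le> len g + 1" using len_mult[of g "s a"] g a len_le[of "[a]"] by simp
  have l2: "len g \<le> len (g \<otimes> s a) + 1" using len_mult[of "g \<otimes> s a" "s a"] g a len_le[of "[a]"]
    by (simp add: ss2)
  have "\<forall>x y::nat. (even x = odd y) \<longrightarrow> x \<le> y+1 \<longrightarrow> y \<le> x+1 \<longrightarrow> x = Suc y \<or> y = Suc x"
    by presburger
  thus ?thesis using p l1 l2 by blast
qed

lemma len_s: "a < n \<Longrightarrow> len (s a) = 1"
  using len_sa[of \<one> a] by simp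

lemma desc: "g \<in> carrier G \<Longrightarrow> 0 < len g \<Longrightarrow> \<exists>k<n. len (g \<otimes> s k) < len g"
proof -
  assume g: "g \<in> carrier G" and p: "0 < len g"
  obtain u where u: "set u \<subseteq> {..<n}" "length u = len g" "word_eval G s u = g" using len_ex[OF g] by blast
  then obtain u' k where uk: "u = u' @ [k]" using p by (metis length_greater_0_conv rev_exhaust)
  have k: "k < n" and u': "set u' \<subseteq> {..<n}" using u uk by auto
  have "g = word_eval G s u' \<otimes> s k" using we_app[OF u', of "[k]"] k uk u by simp
  hence "g \<otimes> s k = word_eval G s u'" using k u' by (simp add: ss2)
  hence "len (g \<otimes> s k) \<le> length u'" using len_le[OF u'] by simp
  thus ?thesis using k u uk by auto
qed

end



context coxsys
begin

definition bb :: "nat \<Rightarrow> nat \<Rightarrow> real" where "bb i j = - cos (pi / real (m i j))"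
definition Bf :: "nat \<Rightarrow> (nat \<Rightarrow> real) \<Rightarrow> real" where "Bf i x = (\<Sum>t<n. bb i t * x t)"
definition al :: "nat \<Rightarrow> nat \<Rightarrow> real" where "al i = (\<lambda>t. if t = i then 1 else 0)"
definition sig :: "nat \<Rightarrow> (nat \<Rightarrow> real) \<Rightarrow> (nat \<Rightarrow> real)" where
  "sig i x = (\<lambda>t. x t - 2 * Bf i x * al i t)"

primrec rho :: "nat list \<Rightarrow> (nat \<Rightarrow> real) \<Rightarrow> (nat \<Rightarrow> real)" where
  "rho [] x = x"
| "rho (a # u) x = sig a (rho u x)"

lemma Bf_al: "t < n \<Longrightarrow> Bf i (al t) = bb i t"
  unfolding Bf_def al_def by (simp add: if_distrib cong: if_cong)

lemma Bf_lin: "Bf i (\<lambda>t. a * x t + b * y t) = a * Bf i x + b * Bf i y"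
  unfolding Bf_def by (simp add: algebra_simps sum.distrib sum_distrib_left)

lemma sig_lin: "sig i (\<lambda>t. a * x t + b * y t) = (\<lambda>t. a * sig i x t + b * sig i y t)"
  unfolding sig_def Bf_lin by (simp add: algebra_simps)

lemma rho_lin: "rho w (\<lambda>t. a * x t + b * y t) = (\<lambda>t. a * rho w x t + b * rho w y t)"
  by (induction w) (simp_all add: sig_lin)

lemma rho_neg: "rho w (\<lambda>t. - x t) = (\<lambda>t. - rho w x t)"
proof -
  have "rho w (\<lambda>t. (-1) * x t + 0 * x t) = (\<lambda>t. (-1) * rho w x t + 0 * rho w x t)" by (rule rho_lin)
  thus ?thesis by simp
qed

lemma rho_app: "rho (u @ v) x = rho u (rho v x)"
  by (induction u) auto

lemma bb_diag: "i < n \<Longrightarrow> bb i i = 1"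
  unfolding bb_def using m_diag by simp

lemma bb_sym: "i < n \<Longrightarrow> j < n \<Longrightarrow> bb i j = bb j i"
  unfolding bb_def using m_sym by simp

lemma sig_sq: "i < n \<Longrightarrow> sig i (sig i x) = x"
proof -
  assume i: "i < n"
  have "sig i x = (\<lambda>t. 1 * x t + (- 2 * Bf i x) * al i t)" unfolding sig_def by (simp add: algebra_simps)
  hence "Bf i (sig i x) = 1 * Bf i x + (- 2 * Bf i x) * Bf i (al i)" by (simp only: Bf_lin)
  hence "Bf i (sig i x) = Bf i x - 2 * Bf i x" using Bf_al[OF i] bb_diag[OF i] by simp
  thus ?thesis unfolding sig_def[of i "sig i x"] by (simp add: sig_def algebra_simps)
qed

definition cc :: "nat \<Rightarrow> nat \<Rightarrow> real" where
  "cc M q = sin (real q * pi / real M) / sin (pi / real M)"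

lemma sinpos: "2 \<le> M \<Longrightarrow> 0 < sin (pi / real M)"
  by (rule sin_gt_zero) (auto simp: field_simps)

lemma cc0[simp]: "cc M 0 = 0" unfolding cc_def by simp
lemma cc1: "2 \<le> M \<Longrightarrow> cc M 1 = 1" unfolding cc_def using sinpos[of M] by simp
lemma ccM: "2 \<le> M \<Longrightarrow> cc M M = 0" unfolding cc_def by simp
lemma ccM1: "2 \<le> M \<Longrightarrow> cc M (M - 1) = 1"
proof -
  assume M: "2 \<le> M"
  have "real (M - 1) * pi / real M = pi - pi / real M" using M by (simp add: of_nat_diff field_simps)
  thus ?thesis unfolding cc_def using sinpos[OF M] by (simp add: sin_pi_minus)
qed
lemma ccMp1: "2 \<le> M \<Longrightarrow> cc M (Suc M) = -1"
proof -
  assume M: "2 \<le> M"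
  have "real (Suc M) * pi / real M = pi / real M + pi" using M by (simp add: field_simps)
  thus ?thesis unfolding cc_def using sinpos[OF M] by (simp add: sin_periodic_pi)
qed
lemma cc_nonneg: "2 \<le> M \<Longrightarrow> q \<le> M \<Longrightarrow> 0 \<le> cc M q"
  unfolding cc_def using sinpos[of M]
  by (intro divide_nonneg_pos sin_ge_zero) (auto simp: field_simps)
lemma cc_pos: "2 \<le> M \<Longrightarrow> 0 < q \<Longrightarrow> q < M \<Longrightarrow> 0 < cc M q"
  unfolding cc_def using sinpos[of M]
  by (intro divide_pos_pos sin_gt_zero) (auto simp: field_simps)
lemma cc_rec: "2 \<le> M \<Longrightarrow> cc M (Suc (Suc q)) = 2 * cos (pi / real M) * cc M (Suc q) - cc M q"
proof -
  assume M: "2 \<le> M"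
  define t where "t = pi / real M"
  have a: "real (Suc (Suc q)) * pi / real M = real (Suc q) * t + t"
    and b: "real q * pi / real M = real (Suc q) * t - t"
    and c: "real (Suc q) * pi / real M = real (Suc q) * t"
    using M unfolding t_def by (simp_all add: field_simps)
  have e: "sin (real (Suc (Suc q)) * pi / real M) = 2 * cos t * sin (real (Suc q) * pi / real M) - sin (real q * pi / real M)"
    unfolding a b c by (simp add: sin_add sin_diff)
  show ?thesis unfolding cc_def using e by (simp add: t_def diff_divide_distrib)
qed

lemma alt_snoc: "alt_word F H (Suc p) = alt_word F H p @ [if even p then F else H]"
  by (induction p arbitrary: F H) auto

lemma alt_set: "set (alt_word F H p) \<subseteq> {F, H}"
  by (induction p arbitrary: F H) auto

lemma sig_span: "F < n \<Longrightarrow> H < n \<Longrightarrow> F \<noteq> H \<Longrightarrow>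
  sig F (\<lambda>t. a * al F t + b * al H t) = (\<lambda>t. (2 * cos (pi / real (m F H)) * b - a) * al F t + b * al H t)"
  unfolding sig_def Bf_lin using Bf_al bb_diag unfolding bb_def
  by (auto simp: algebra_simps al_def fun_eq_iff)

lemma alt_pos: "F < n \<Longrightarrow> H < n \<Longrightarrow> F \<noteq> H \<Longrightarrow>
  rho (alt_word F H p) (al (if even p then F else H)) =
    (\<lambda>t. cc (m F H) (Suc p) * al F t + cc (m F H) p * al H t)"
proof (induction p arbitrary: F H)
  case 0
  then show ?case using cc1[OF m_ge2[OF 0]] by simp
next
  case (Suc p)
  have M: "2 \<le> m F H" using m_ge2 Suc.prems by blast
  have ms: "m H F = m F H" using m_sym Suc.prems by simp
  have "rho (alt_word F H (Suc p)) (al (if even (Suc p) then F else H))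
     = sig F (rho (alt_word H F p) (al (if even p then H else F)))" by simp
  also have "\<dots> = sig F (\<lambda>t. cc (m F H) (Suc p) * al H t + cc (m F H) p * al F t)"
    using Suc.IH[of H F] Suc.prems ms by simp
  also have "\<dots> = sig F (\<lambda>t. cc (m F H) p * al F t + cc (m F H) (Suc p) * al H t)"
    by (simp add: add.commute)
  also have "\<dots> = (\<lambda>t. cc (m F H) (Suc (Suc p)) * al F t + cc (m F H) (Suc p) * al H t)"
    using sig_span[of F H] Suc.prems cc_rec[OF M, of p] by simp
  finally show ?case .
qed

lemma alt_neg: "F < n \<Longrightarrow> H < n \<Longrightarrow> F \<noteq> H \<Longrightarrow> 0 < p \<Longrightarrow>
  rho (alt_word F H p) (al (if odd p then F else H)) =
    (\<lambda>t. - (cc (m F H) p * al F t + cc (m F H) (p - 1) * al H t))"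
proof -
  assume a: "F < n" "H < n" "F \<noteq> H" "0 < p"
  then obtain q where q: "p = Suc q" by (cases p) auto
  let ?X = "if even q then F else H"
  have X: "?X < n" using a by auto
  have sX: "sig ?X (al ?X) = (\<lambda>t. - al ?X t)"
    unfolding sig_def using Bf_al[OF X] bb_diag[OF X] by (simp add: fun_eq_iff)
  have ee: "(if odd p then F else H) = ?X" using q by simp
  have "rho (alt_word F H p) (al (if odd p then F else H)) = rho (alt_word F H q) (sig ?X (al ?X))"
    unfolding ee by (simp only: q alt_snoc rho_app rho.simps)
  also have "\<dots> = (\<lambda>t. - rho (alt_word F H q) (al ?X) t)" using sX rho_neg by simp
  also have "\<dots> = (\<lambda>t. - (cc (m F H) p * al F t + cc (m F H) (p - 1) * al H t))"
    using alt_pos[OF a(1-3), of q] q by simp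
  finally show ?thesis .
qed

end



context coxsys
begin

lemma braid_al: assumes a: "i < n" "j < n" "i \<noteq> j"
  shows "rho (alt_word i j (m i j)) (al i) = rho (alt_word j i (m i j)) (al i)"
proof -
  let ?M = "m i j"
  have M: "2 \<le> ?M" using m_ge2 a by blast
  have ms: "m j i = ?M" using m_sym a by simp
  have c: "cc ?M ?M = 0" "cc ?M (?M - 1) = 1" "cc ?M (Suc ?M) = -1"
    using ccM[OF M] ccM1[OF M] ccMp1[OF M] by auto
  have M0: "0 < ?M" using M by simp
  show ?thesis
  proof (cases "even ?M")
    case True
    have "rho (alt_word i j ?M) (al i) = (\<lambda>t. cc ?M (Suc ?M) * al i t + cc ?M ?M * al j t)"
      using alt_pos[of i j ?M] a True by simp
    moreover have "rho (alt_word j i ?M) (al i) = (\<lambda>t. -(cc ?M ?M * al j t + cc ?M (?M - 1) * al i t))"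
      using alt_neg[of j i ?M] a True M0 ms by simp
    ultimately show ?thesis using c by simp
  next
    case False
    have "rho (alt_word i j ?M) (al i) = (\<lambda>t. -(cc ?M ?M * al i t + cc ?M (?M - 1) * al j t))"
      using alt_neg[of i j ?M] a False M0 by simp
    moreover have "rho (alt_word j i ?M) (al i) = (\<lambda>t. cc ?M (Suc ?M) * al j t + cc ?M ?M * al i t)"
      using alt_pos[of j i ?M] a False ms by simp
    ultimately show ?thesis using c by simp
  qed
qed

lemma rho_fix: "\<forall>a\<in>set w. Bf a y = 0 \<Longrightarrow> rho w y = y"
  by (induction w) (auto simp: sig_def)

lemma rho_decomp: assumes "\<forall>a\<in>set w. Bf a y = 0"
  shows "rho w (\<lambda>t. y t + (p * al i t + q * al j t)) = (\<lambda>t. y t + (p * rho w (al i) t + q * rho w (al j) t))"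
proof -
  have "rho w (\<lambda>t. 1 * y t + 1 * (\<lambda>t. p * al i t + q * al j t) t)
      = (\<lambda>t. 1 * rho w y t + 1 * rho w (\<lambda>t. p * al i t + q * al j t) t)" by (rule rho_lin)
  thus ?thesis using rho_fix[OF assms] rho_lin[of w p "al i" q "al j"] by simp
qed

lemma Bf_diff: "Bf i (\<lambda>t. x t - z t) = Bf i x - Bf i z"
  unfolding Bf_def by (simp add: algebra_simps sum_subtractf)

lemma rho_braid: assumes a: "i < n" "j < n"
  shows "rho (alt_word i j (m i j)) = rho (alt_word j i (m i j))"
proof (cases "i = j")
  case True then show ?thesis by simp
next
  case False
  let ?M = "m i j"
  have M: "2 \<le> ?M" using m_ge2 a False by blast
  have ms: "m j i = ?M" using m_sym a by simp
  define \<beta> where "\<beta> = bb i j"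
  have bji: "bb j i = \<beta>" unfolding \<beta>_def using bb_sym a by simp
  have "\<bar>cos (pi / real ?M)\<bar> < 1"
  proof -
    have "cos (pi / real ?M) ^ 2 = 1 - sin (pi / real ?M) ^ 2" by (simp add: cos_squared_eq)
    moreover have "0 < sin (pi / real ?M) ^ 2" using sinpos[OF M] by simp
    ultimately have "cos (pi / real ?M) ^ 2 < 1" by linarith
    thus ?thesis by (simp add: abs_square_less_1)
  qed
  hence D: "0 < 1 - \<beta>^2" unfolding \<beta>_def bb_def by (simp add: abs_square_less_1)
  show ?thesis
  proof
    fix x
    define a1 where "a1 = Bf i x"
    define b1 where "b1 = Bf j x"
    define p where "p = (a1 - \<beta> * b1) / (1 - \<beta>^2)"
    define q where "q = (b1 - \<beta> * a1) / (1 - \<beta>^2)"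
    define z where "z = (\<lambda>t. p * al i t + q * al j t)"
    define y where "y = (\<lambda>t. x t - z t)"
    have Biz: "Bf i z = p + q * \<beta>" unfolding z_def Bf_lin using Bf_al a bb_diag \<beta>_def by simp
    have Bjz: "Bf j z = p * \<beta> + q" unfolding z_def Bf_lin using Bf_al a bb_diag bji by simp
    have "p + q * \<beta> = ((a1 - \<beta> * b1) + (b1 - \<beta> * a1) * \<beta>) / (1 - \<beta>^2)"
      unfolding p_def q_def by (simp add: add_divide_distrib)
    also have "\<dots> = a1 * (1 - \<beta>^2) / (1 - \<beta>^2)" by (simp add: algebra_simps power2_eq_square)
    also have "\<dots> = a1" using D by simp
    finally have pq1: "p + q * \<beta> = a1" .
    have "p * \<beta> + q = ((a1 - \<beta> * b1) * \<beta> + (b1 - \<beta> * a1)) / (1 - \<beta>^2)"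
      unfolding p_def q_def by (simp add: add_divide_distrib)
    also have "\<dots> = b1 * (1 - \<beta>^2) / (1 - \<beta>^2)" by (simp add: algebra_simps power2_eq_square)
    also have "\<dots> = b1" using D by simp
    finally have pq2: "p * \<beta> + q = b1" .
    have Biy: "Bf i y = 0" unfolding y_def Bf_diff Biz pq1 a1_def by simp
    have Bjy: "Bf j y = 0" unfolding y_def Bf_diff Bjz pq2 b1_def by simp
    have xe: "x = (\<lambda>t. y t + (p * al i t + q * al j t))" unfolding y_def z_def by simp
    have f1: "\<forall>a\<in>set (alt_word i j ?M). Bf a y = 0" using alt_set[of i j ?M] Biy Bjy by auto
    have f2: "\<forall>a\<in>set (alt_word j i ?M). Bf a y = 0" using alt_set[of j i ?M] Biy Bjy by auto
    have e1: "rho (alt_word i j ?M) (al i) = rho (alt_word j i ?M) (al i)" using braid_al[OF a False] .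
    have e2: "rho (alt_word i j ?M) (al j) = rho (alt_word j i ?M) (al j)"
      using braid_al[of j i] a False ms by simp
    show "rho (alt_word i j ?M) x = rho (alt_word j i ?M) x"
      apply (subst (1 2) xe)
      unfolding rho_decomp[OF f1] rho_decomp[OF f2] e1 e2 ..
  qed
qed

lemma rho_cox: "cox_equiv n m u v \<Longrightarrow> rho u = rho v"
proof (induction rule: cox_equiv.induct)
  case (ctxt u v a b)
  then show ?case by (intro ext) (simp add: rho_app)
next
  case (square i)
  then show ?case by (auto simp: fun_eq_iff sig_sq)
next
  case (braid i j)
  then show ?case by (rule rho_braid)
qed auto

definition R :: "'a \<Rightarrow> (nat \<Rightarrow> real) \<Rightarrow> (nat \<Rightarrow> real)" where
  "R g = rho (SOME u. set u \<subseteq> {..<n} \<and> word_eval G s u = g)"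

lemma R_we: "set u \<subseteq> {..<n} \<Longrightarrow> R (word_eval G s u) = rho u"
proof -
  assume u: "set u \<subseteq> {..<n}"
  let ?v = "SOME v. set v \<subseteq> {..<n} \<and> word_eval G s v = word_eval G s u"
  have v: "set ?v \<subseteq> {..<n} \<and> word_eval G s ?v = word_eval G s u" by (rule someI) (use u in blast)
  hence "cox_equiv n m ?v u" using we_iff[of ?v u] u by simp
  thus ?thesis unfolding R_def by (rule rho_cox)
qed

lemma R_mult: "g \<in> carrier G \<Longrightarrow> h \<in> carrier G \<Longrightarrow> R (g \<otimes> h) x = R g (R h x)"
proof -
  assume g: "g \<in> carrier G" and h: "h \<in> carrier G"
  obtain u where u: "set u \<subseteq> {..<n}" "word_eval G s u = g" using car_word[OF g] by blast
  obtain v where v: "set v \<subseteq> {..<n}" "word_eval G s v = h" using car_word[OF h] by blast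
  have "g \<otimes> h = word_eval G s (u @ v)" using we_app u v by simp
  moreover have "set (u @ v) \<subseteq> {..<n}" using u v by auto
  ultimately have "R (g \<otimes> h) = rho (u @ v)" using R_we by simp
  moreover have "R g = rho u" "R h = rho v" using R_we u v by auto
  ultimately show ?thesis by (simp add: rho_app)
qed

lemma R_one: "R \<one> x = x"
  using R_we[of "[]"] by simp

lemma R_s: "a < n \<Longrightarrow> R (s a) x = sig a x"
  using R_we[of "[a]"] by simp

lemma R_lin: "g \<in> carrier G \<Longrightarrow> R g (\<lambda>t. a * x t + b * y t) = (\<lambda>t. a * R g x t + b * R g y t)"
proof -
  assume "g \<in> carrier G"
  then obtain u where u: "set u \<subseteq> {..<n}" "word_eval G s u = g" using car_word by blast
  hence "R g = rho u" using R_we by blast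
  thus ?thesis by (simp add: rho_lin)
qed

lemma R_neg: "g \<in> carrier G \<Longrightarrow> R g (\<lambda>t. - x t) = (\<lambda>t. - R g x t)"
proof -
  assume "g \<in> carrier G"
  then obtain u where u: "set u \<subseteq> {..<n}" "word_eval G s u = g" using car_word by blast
  hence "R g = rho u" using R_we by blast
  thus ?thesis by (simp add: rho_neg)
qed

lemma R_inj: "g \<in> carrier G \<Longrightarrow> R g x = R g y \<Longrightarrow> x = y"
proof -
  assume g: "g \<in> carrier G" and e: "R g x = R g y"
  have "R (inv g \<otimes> g) x = R (inv g \<otimes> g) y" using R_mult[of "inv g" g] g e by simp
  thus ?thesis using g R_one by simp
qed

lemma rho_supp: "set u \<subseteq> {..<n} \<Longrightarrow> n \<le> t \<Longrightarrow> rho u x t = x t"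
  by (induction u) (auto simp: sig_def al_def)

lemma R_supp: "g \<in> carrier G \<Longrightarrow> n \<le> t \<Longrightarrow> R g x t = x t"
proof -
  assume "g \<in> carrier G" "n \<le> t"
  then obtain u where u: "set u \<subseteq> {..<n}" "word_eval G s u = g" using car_word by blast
  hence "R g = rho u" using R_we by blast
  thus ?thesis using rho_supp u \<open>n \<le> t\<close> by simp
qed

end



context coxsys
begin

lemma alt_range: "F < n \<Longrightarrow> H < n \<Longrightarrow> set (alt_word F H p) \<subseteq> {..<n}"
  using alt_set[of F H p] by auto

lemma snoc_last: "F < n \<Longrightarrow> H < n \<Longrightarrow> 0 < p \<Longrightarrow>
  word_eval G s (alt_word F H p) \<otimes> s (if odd p then F else H) = word_eval G s (alt_word F H (p - 1))"
proof -
  assume a: "F < n" "H < n" "0 < p"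
  then obtain q where q: "p = Suc q" by (cases p) auto
  let ?X = "if even q then F else H"
  have X: "?X < n" using a by auto
  have "word_eval G s (alt_word F H p) = word_eval G s (alt_word F H q) \<otimes> s ?X"
    unfolding q alt_snoc using we_app[OF alt_range[OF a(1,2)], of "[?X]" q] X by simp
  moreover have "(if odd p then F else H) = ?X" using q by simp
  ultimately show ?thesis using X alt_range[OF a(1,2)] q by (simp add: ss2)
qed

context
  fixes i k assumes ik: "i < n" "k < n" "i \<noteq> k"
begin

definition WI :: "'a set" where "WI = {word_eval G s u | u. set u \<subseteq> {i, k}}"
definition oth :: "nat \<Rightarrow> nat" where "oth F = (if F = i then k else i)"
definition NF :: "'a \<Rightarrow> nat \<Rightarrow> nat \<Rightarrow> bool" where
  "NF y F p \<longleftrightarrow> F \<in> {i, k} \<and> p \<le> m i k \<and> y = word_eval G s (alt_word F (oth F) p)"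
definition lenI :: "'a \<Rightarrow> nat" where "lenI y = (LEAST p. \<exists>F. NF y F p)"

lemma Mik: "2 \<le> m i k" using m_ge2 ik by blast
lemma mki: "m k i = m i k" using m_sym ik by simp

lemma oth_simps: "F \<in> {i,k} \<Longrightarrow> oth F \<in> {i,k}" "F \<in> {i,k} \<Longrightarrow> oth (oth F) = F"
  "F \<in> {i,k} \<Longrightarrow> oth F \<noteq> F" "F \<in> {i,k} \<Longrightarrow> m F (oth F) = m i k"
  unfolding oth_def using ik mki by auto

lemma ik_n: "F \<in> {i,k} \<Longrightarrow> F < n" using ik by auto

lemma WI_sub: "set u \<subseteq> {i, k} \<Longrightarrow> set u \<subseteq> {..<n}" using ik by auto

lemma WI_car: "y \<in> WI \<Longrightarrow> y \<in> carrier G"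
proof -
  assume "y \<in> WI"
  then obtain u where u: "set u \<subseteq> {i,k}" "y = word_eval G s u" unfolding WI_def by blast
  thus ?thesis using WI_sub we_car by simp
qed

lemma WI_left: "y \<in> WI \<Longrightarrow> a \<in> {i,k} \<Longrightarrow> s a \<otimes> y \<in> WI"
proof -
  assume "y \<in> WI" "a \<in> {i,k}"
  then obtain u where u: "set u \<subseteq> {i,k}" "y = word_eval G s u" unfolding WI_def by blast
  hence "s a \<otimes> y = word_eval G s (a # u)" by simp
  moreover have "set (a # u) \<subseteq> {i,k}" using u \<open>a \<in> {i,k}\<close> by auto
  ultimately show ?thesis unfolding WI_def by (intro CollectI exI[where x="a # u"] conjI)
qed

lemma WI_right: "y \<in> WI \<Longrightarrow> a \<in> {i,k} \<Longrightarrow> y \<otimes> s a \<in> WI"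
proof -
  assume "y \<in> WI" "a \<in> {i,k}"
  then obtain u where u: "set u \<subseteq> {i,k}" "y = word_eval G s u" unfolding WI_def by blast
  hence "y \<otimes> s a = word_eval G s (u @ [a])" using we_app[of u "[a]"] WI_sub ik_n \<open>a \<in> {i,k}\<close> by simp
  moreover have "set (u @ [a]) \<subseteq> {i,k}" using u \<open>a \<in> {i,k}\<close> by auto
  ultimately show ?thesis unfolding WI_def by (intro CollectI exI[where x="u @ [a]"] conjI)
qed

lemma s_WI: "a \<in> {i,k} \<Longrightarrow> s a \<in> WI"
proof -
  assume a: "a \<in> {i,k}"
  have "s a = word_eval G s [a]" using ik_n[OF a] by simp
  moreover have "set [a] \<subseteq> {i,k}" using a by auto
  ultimately show ?thesis unfolding WI_def by (intro CollectI exI[where x="[a]"] conjI)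
qed

lemma braidG: "F \<in> {i,k} \<Longrightarrow>
   word_eval G s (alt_word F (oth F) (m i k)) = word_eval G s (alt_word (oth F) F (m i k))"
proof -
  assume F: "F \<in> {i,k}"
  have "cox_equiv n m (alt_word F (oth F) (m F (oth F))) (alt_word (oth F) F (m F (oth F)))"
    using F oth_simps ik_n by (intro cox_equiv.braid) auto
  thus ?thesis using we_iff alt_range F oth_simps ik_n by auto
qed

lemma NF_left: "NF y F p \<Longrightarrow> a \<in> {i,k} \<Longrightarrow> \<exists>F' p'. NF (s a \<otimes> y) F' p' \<and> p' \<le> p + 1"
proof -
  assume N: "NF y F p" and a: "a \<in> {i,k}"
  have F: "F \<in> {i,k}" and p: "p \<le> m i k" and y: "y = word_eval G s (alt_word F (oth F) p)"
    using N unfolding NF_def by auto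
  have M: "2 \<le> m i k" by (rule Mik)
  show ?thesis
  proof (cases "a = F")
    case True
    show ?thesis
    proof (cases p)
      case 0
      have "NF (s a \<otimes> y) a 1" unfolding NF_def using y 0 a M True ik_n by auto
      thus ?thesis using 0 by auto
    next
      case (Suc q)
      have "s a \<otimes> y = word_eval G s (alt_word (oth F) F q)"
        using y Suc True ik_n[OF a] alt_range oth_simps F ik_n by (simp add: ss3)
      hence "NF (s a \<otimes> y) (oth F) q" unfolding NF_def using oth_simps F p Suc by auto
      thus ?thesis using Suc by (intro exI[of _ "oth F"] exI[of _ q]) auto
    qed
  next
    case False
    hence aF: "a = oth F" "oth a = F" using a F unfolding oth_def by auto
    show ?thesis
    proof (cases "p < m i k")
      case True
      have "s a \<otimes> y = word_eval G s (alt_word a (oth a) (Suc p))" using y aF by simp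
      hence "NF (s a \<otimes> y) a (Suc p)" unfolding NF_def using a True by auto
      thus ?thesis by auto
    next
      case False
      hence pM: "p = m i k" using p by simp
      then obtain q where q: "m i k = Suc q" using M by (cases "m i k") auto
      have "y = word_eval G s (alt_word a F (m i k))" using y braidG[OF F] pM aF by simp
      also have "\<dots> = s a \<otimes> word_eval G s (alt_word F a q)" using q by simp
      finally have "s a \<otimes> y = word_eval G s (alt_word F (oth F) q)"
        using aF ik_n[OF a] alt_range ik_n[OF F] by (simp add: ss3)
      hence "NF (s a \<otimes> y) F q" unfolding NF_def using F q by auto
      thus ?thesis using pM q by (intro exI[of _ F] exI[of _ q]) auto
    qed
  qed
qed

lemma WI_NF: "y \<in> WI \<Longrightarrow> \<exists>F p. NF y F p"
proof -
  assume "y \<in> WI"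
  then obtain u where u: "set u \<subseteq> {i,k}" "y = word_eval G s u" unfolding WI_def by blast
  have "\<exists>F p. NF (word_eval G s u) F p" using u(1)
  proof (induction u)
    case Nil
    have "NF \<one> i 0" unfolding NF_def by simp
    thus ?case by auto
  next
    case (Cons a u)
    then obtain F p where "NF (word_eval G s u) F p" by auto
    thus ?case using NF_left[of "word_eval G s u" F p a] Cons.prems by auto
  qed
  thus ?thesis using u by simp
qed

lemma lenI_NF: "y \<in> WI \<Longrightarrow> \<exists>F. NF y F (lenI y)"
  unfolding lenI_def by (rule LeastI_ex) (use WI_NF in blast)

lemma lenI_le: "NF y F p \<Longrightarrow> lenI y \<le> p"
  unfolding lenI_def by (rule Least_le) blast

lemma NF_range: "NF y F p \<Longrightarrow> set (alt_word F (oth F) p) \<subseteq> {..<n}"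
  unfolding NF_def using alt_range ik_n oth_simps by blast

lemma NF_par: "NF y F p \<Longrightarrow> even (len y) = even p"
  using len_par[OF NF_range] unfolding NF_def by auto

lemma len_le_lenI: "y \<in> WI \<Longrightarrow> len y \<le> lenI y"
proof -
  assume "y \<in> WI"
  then obtain F where N: "NF y F (lenI y)" using lenI_NF by blast
  show ?thesis using len_le[OF NF_range[OF N]] N unfolding NF_def by simp
qed

lemma lenI_par: "y \<in> WI \<Longrightarrow> even (lenI y) = even (len y)"
proof -
  assume "y \<in> WI"
  then obtain F where "NF y F (lenI y)" using lenI_NF by blast
  thus ?thesis using NF_par by simp
qed

lemma lenI_left: "y \<in> WI \<Longrightarrow> a \<in> {i,k} \<Longrightarrow> lenI (s a \<otimes> y) \<le> lenI y + 1"
proof -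
  assume "y \<in> WI" "a \<in> {i,k}"
  then obtain F where "NF y F (lenI y)" using lenI_NF by blast
  then obtain F' p' where N: "NF (s a \<otimes> y) F' p'" "p' \<le> lenI y + 1" using NF_left \<open>a \<in> {i,k}\<close> by blast
  thus ?thesis using lenI_le[OF N(1)] by linarith
qed

lemma lenI_s: "a \<in> {i,k} \<Longrightarrow> lenI (s a) = 1"
proof -
  assume a: "a \<in> {i,k}"
  have "NF (s a) a 1" unfolding NF_def using a Mik ik_n by auto
  hence "lenI (s a) \<le> 1" by (rule lenI_le)
  moreover have "odd (lenI (s a))" using lenI_par[OF s_WI[OF a]] len_s ik_n[OF a] by simp
  ultimately show ?thesis by (cases "lenI (s a)") auto
qed

lemma R_NF: "NF y F p \<Longrightarrow> R y = rho (alt_word F (oth F) p)"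
  using R_we NF_range unfolding NF_def by blast


lemma NF_car: "NF y F p \<Longrightarrow> y \<in> carrier G"
  using we_car[OF NF_range] unfolding NF_def by auto

lemma rho_alt_i: "NF y F p \<Longrightarrow> 0 < p \<Longrightarrow> i = (if odd p then F else oth F) \<Longrightarrow>
  R y (al i) = (\<lambda>t. - (cc (m i k) p * al F t + cc (m i k) (p - 1) * al (oth F) t))"
proof -
  assume N: "NF y F p" and p: "0 < p" and ie: "i = (if odd p then F else oth F)"
  have F: "F \<in> {i,k}" using N unfolding NF_def by auto
  have "R y (al i) = rho (alt_word F (oth F) p) (al (if odd p then F else oth F))"
    using R_NF[OF N] ie by simp
  also have "\<dots> = (\<lambda>t. - (cc (m F (oth F)) p * al F t + cc (m F (oth F)) (p - 1) * al (oth F) t))"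
    using alt_neg[of F "oth F" p] ik_n[OF F] ik_n[OF oth_simps(1)[OF F]] oth_simps(3)[OF F] p by simp
  finally show ?thesis using oth_simps(4)[OF F] by simp
qed

lemma rho_alt_ni: "NF y F p \<Longrightarrow> i \<noteq> (if odd p then F else oth F) \<Longrightarrow>
  R y (al i) = (\<lambda>t. cc (m i k) (Suc p) * al F t + cc (m i k) p * al (oth F) t)"
proof -
  assume N: "NF y F p" and ie: "i \<noteq> (if odd p then F else oth F)"
  have F: "F \<in> {i,k}" using N unfolding NF_def by auto
  have ie2: "i = (if even p then F else oth F)" using ie F unfolding oth_def by auto
  have "R y (al i) = rho (alt_word F (oth F) p) (al (if even p then F else oth F))"
    using R_NF[OF N] ie2 by simp
  also have "\<dots> = (\<lambda>t. cc (m F (oth F)) (Suc p) * al F t + cc (m F (oth F)) p * al (oth F) t)"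
    using alt_pos[of F "oth F" p] ik_n[OF F] ik_n[OF oth_simps(1)[OF F]] oth_simps(3)[OF F] by simp
  finally show ?thesis using oth_simps(4)[OF F] by simp
qed

lemma conv: "F \<in> {i,k} \<Longrightarrow> \<exists>c d. (\<lambda>t. a * al F t + b * al (oth F) t) = (\<lambda>t. c * al i t + d * al k t) \<and>
   ((F = i \<and> c = a \<and> d = b) \<or> (F = k \<and> c = b \<and> d = a))"
proof -
  assume F: "F \<in> {i,k}"
  show ?thesis
  proof (cases "F = i")
    case True
    thus ?thesis unfolding oth_def by auto
  next
    case False
    hence "F = k" "oth F = i" using F unfolding oth_def by auto
    thus ?thesis by (intro exI[of _ b] exI[of _ a]) (auto simp: fun_eq_iff)
  qed
qed

lemma DP: assumes y: "y \<in> WI" and lt: "lenI y < lenI (y \<otimes> s i)"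
  shows "\<exists>c d. 0 \<le> c \<and> 0 \<le> d \<and> R y (al i) = (\<lambda>t. c * al i t + d * al k t)"
proof -
  obtain F where N: "NF y F (lenI y)" using lenI_NF[OF y] by blast
  define p where "p = lenI y"
  have N: "NF y F p" using N p_def by simp
  have F: "F \<in> {i,k}" and pM: "p \<le> m i k" and ye: "y = word_eval G s (alt_word F (oth F) p)"
    using N unfolding NF_def by auto
  have M: "2 \<le> m i k" by (rule Mik)
  have Fn: "F < n" "oth F < n" using ik_n F oth_simps by auto
  show ?thesis
  proof (cases "p = 0")
    case True
    hence "y = \<one>" using ye by simp
    hence "R y (al i) = (\<lambda>t. 1 * al i t + 0 * al k t)" using R_one by simp
    thus ?thesis by (intro exI[of _ "1::real"] exI[of _ "0::real"] conjI) auto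
  next
    case p0: False
    show ?thesis
    proof (cases "i = (if odd p then F else oth F)")
      case True
      have "y \<otimes> s i = word_eval G s (alt_word F (oth F) (p - 1))"
        using snoc_last[OF Fn, of p] p0 True ye by simp
      hence "NF (y \<otimes> s i) F (p - 1)" unfolding NF_def using F pM by auto
      hence "lenI (y \<otimes> s i) \<le> p - 1" by (rule lenI_le)
      thus ?thesis using lt p_def p0 by simp
    next
      case ni: False
      show ?thesis
      proof (cases "p = m i k")
        case True
        have y2: "y = word_eval G s (alt_word (oth F) F (m i k))" using ye True braidG[OF F] by simp
        have ie: "i = (if odd (m i k) then oth F else F)" using ni True F unfolding oth_def by auto
        have M0: "0 < m i k" using M by simp
        have "y \<otimes> s i = word_eval G s (alt_word (oth F) F (m i k - 1))"
          using snoc_last[of "oth F" F "m i k"] Fn M0 y2 ie by simp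
        hence "NF (y \<otimes> s i) (oth F) (m i k - 1)" unfolding NF_def using F oth_simps by auto
        hence "lenI (y \<otimes> s i) \<le> m i k - 1" by (rule lenI_le)
        thus ?thesis using lt p_def True M by simp
      next
        case False
        hence pl: "Suc p \<le> m i k" using pM by simp
        have e: "R y (al i) = (\<lambda>t. cc (m i k) (Suc p) * al F t + cc (m i k) p * al (oth F) t)"
          by (rule rho_alt_ni[OF N ni])
        obtain c d where cd: "(\<lambda>t. cc (m i k) (Suc p) * al F t + cc (m i k) p * al (oth F) t) = (\<lambda>t. c * al i t + d * al k t)"
          "((F = i \<and> c = cc (m i k) (Suc p) \<and> d = cc (m i k) p) \<or> (F = k \<and> c = cc (m i k) p \<and> d = cc (m i k) (Suc p)))"
          using conv[OF F] by blast
        have "0 \<le> c" "0 \<le> d" using cd(2) cc_nonneg[OF M] pl by auto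
        thus ?thesis using e cd(1) by auto
      qed
    qed
  qed
qed

lemma Dclass: assumes y: "y \<in> WI"
  shows "\<exists>c d. R y (al i) = (\<lambda>t. c * al i t + d * al k t) \<and>
     ((c \<le> 0 \<and> d \<le> 0) \<or> (0 < c \<and> 0 < d) \<or>
      (c = 1 \<and> d = 0 \<and> (y = \<one> \<or> (even (m i k) \<and> y = word_eval G s (alt_word k i (m i k - 1))))) \<or>
      (c = 0 \<and> d = 1 \<and> odd (m i k) \<and> y = word_eval G s (alt_word i k (m i k - 1))))"
proof -
  obtain F p where N: "NF y F p" using WI_NF[OF y] by blast
  have F: "F \<in> {i,k}" and pM: "p \<le> m i k" and ye: "y = word_eval G s (alt_word F (oth F) p)"
    using N unfolding NF_def by auto
  have M: "2 \<le> m i k" by (rule Mik)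
  show ?thesis
  proof (cases "p = 0")
    case True
    hence "y = \<one>" using ye by simp
    hence "R y (al i) = (\<lambda>t. 1 * al i t + 0 * al k t)" using R_one by simp
    thus ?thesis using \<open>y = \<one>\<close> by fastforce
  next
    case p0: False
    show ?thesis
    proof (cases "i = (if odd p then F else oth F)")
      case True
      have e: "R y (al i) = (\<lambda>t. (- cc (m i k) p) * al F t + (- cc (m i k) (p - 1)) * al (oth F) t)"
        using rho_alt_i[OF N _ True] p0 by simp
      obtain c d where cd: "(\<lambda>t. (- cc (m i k) p) * al F t + (- cc (m i k) (p - 1)) * al (oth F) t) = (\<lambda>t. c * al i t + d * al k t)"
          "((F = i \<and> c = - cc (m i k) p \<and> d = - cc (m i k) (p - 1)) \<or> (F = k \<and> c = - cc (m i k) (p - 1) \<and> d = - cc (m i k) p))"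
          using conv[OF F] by blast
      have "c \<le> 0" "d \<le> 0" using cd(2) cc_nonneg[OF M, of p] cc_nonneg[OF M, of "p - 1"] pM by auto
      thus ?thesis using e cd(1) by auto
    next
      case ni: False
      have e: "R y (al i) = (\<lambda>t. cc (m i k) (Suc p) * al F t + cc (m i k) p * al (oth F) t)"
        by (rule rho_alt_ni[OF N ni])
      obtain c d where cd: "(\<lambda>t. cc (m i k) (Suc p) * al F t + cc (m i k) p * al (oth F) t) = (\<lambda>t. c * al i t + d * al k t)"
          "((F = i \<and> c = cc (m i k) (Suc p) \<and> d = cc (m i k) p) \<or> (F = k \<and> c = cc (m i k) p \<and> d = cc (m i k) (Suc p)))"
          using conv[OF F] by blast
      have R: "R y (al i) = (\<lambda>t. c * al i t + d * al k t)" using e cd(1) by simp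
      consider "p = m i k" | "p = m i k - 1" | "p < m i k - 1" using pM by linarith
      thus ?thesis
      proof cases
        case 1
        have "c \<le> 0" "d \<le> 0" using cd(2) ccMp1[OF M] ccM[OF M] 1 by auto
        thus ?thesis using R by auto
      next
        case 2
        have c1: "cc (m i k) (Suc p) = 0" "cc (m i k) p = 1" using 2 M ccM[OF M] ccM1[OF M] by auto
        show ?thesis
        proof (cases "F = i")
          case True
          have "even p" using ni True ik unfolding oth_def by (auto split: if_splits)
          hence "odd (m i k)" using 2 M by (cases "m i k") auto
          moreover have "y = word_eval G s (alt_word i k (m i k - 1))" using ye True 2 unfolding oth_def by simp
          moreover have "c = 0" "d = 1" using cd(2) c1 True ik by auto
          ultimately show ?thesis using R by blast
        next
          case False
          hence Fk: "F = k" using F by auto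
          have "odd p" using ni Fk ik unfolding oth_def by (auto split: if_splits)
          hence "even (m i k)" using 2 M by (cases "m i k") auto
          moreover have "y = word_eval G s (alt_word k i (m i k - 1))" using ye Fk 2 ik unfolding oth_def by simp
          moreover have "c = 1" "d = 0" using cd(2) c1 Fk ik by auto
          ultimately show ?thesis using R by blast
        qed
      next
        case 3
        have "0 < c" "0 < d" using cd(2) cc_pos[OF M, of p] cc_pos[OF M, of "Suc p"] 3 p0 by auto
        thus ?thesis using R by auto
      qed
    qed
  qed
qed

end
end



context coxsys
begin

definition nonneg :: "(nat \<Rightarrow> real) \<Rightarrow> bool" where "nonneg x \<longleftrightarrow> (\<forall>t<n. 0 \<le> x t)"

lemma len_parity_s: "g \<in> carrier G \<Longrightarrow> a < n \<Longrightarrow> even (len (g \<otimes> s a)) = odd (len g)"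
  using len_sa by fastforce

theorem pos: "w \<in> carrier G \<Longrightarrow> i < n \<Longrightarrow> len w < len (w \<otimes> s i) \<Longrightarrow> nonneg (R w (al i))"
proof (induction "len w" arbitrary: w i rule: less_induct)
  case less
  note w = less.prems(1) and i = less.prems(2) and lt = less.prems(3)
  show ?case
  proof (cases "len w = 0")
    case True
    hence "w = \<one>" using len0 w by blast
    thus ?thesis unfolding nonneg_def using R_one by (simp add: al_def)
  next
    case False
    then obtain k where k: "k < n" "len (w \<otimes> s k) < len w" using desc w by blast
    have ik: "i \<noteq> k" using k lt by auto
    note ikk = i k(1) ik
    define A where "A = {x \<in> carrier G. \<exists>y \<in> WI i k. w = x \<otimes> y \<and> len w = len x + lenI i k y}"
    have kI: "k \<in> {i,k}" and iI: "i \<in> {i,k}" by auto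
    have wk: "w \<otimes> s k \<in> A"
    proof -
      have "len w = len (w \<otimes> s k) + 1" using len_sa[OF w k(1)] k(2) by simp
      moreover have "w = (w \<otimes> s k) \<otimes> s k" using ss2 w k by simp
      ultimately show ?thesis unfolding A_def using s_WI[OF ikk kI] lenI_s[OF ikk kI] w k by auto
    qed
    obtain x where xA: "x \<in> A" and xmin: "\<forall>x'. x' \<in> A \<longrightarrow> len x \<le> len x'"
      using ex_has_least_nat[of "\<lambda>x. x \<in> A" "w \<otimes> s k" len] wk by blast
    obtain y where x: "x \<in> carrier G" and y: "y \<in> WI i k" and wxy: "w = x \<otimes> y"
      and lw: "len w = len x + lenI i k y" using xA unfolding A_def by blast
    have yc: "y \<in> carrier G" using WI_car[OF ikk y] .
    have lx: "len x < len w" using xmin wk k by fastforce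
    have up: "len x < len (x \<otimes> s a)" if a: "a \<in> {i,k}" for a
    proof (rule ccontr)
      assume nh: "\<not> len x < len (x \<otimes> s a)"
      have an: "a < n" using a ikk by auto
      hence l1: "len x = Suc (len (x \<otimes> s a))" using len_sa[OF x an] nh by auto
      have ya: "s a \<otimes> y \<in> WI i k" using WI_left[OF ikk y a] .
      have we: "w = (x \<otimes> s a) \<otimes> (s a \<otimes> y)" using wxy x yc an by (simp add: m_assoc ss3)
      have h1: "len w \<le> len (x \<otimes> s a) + len (s a \<otimes> y)" using we len_mult x an yc by simp
      have h2: "len (s a \<otimes> y) \<le> lenI i k (s a \<otimes> y)" using len_le_lenI[OF ikk ya] .
      have h3: "lenI i k (s a \<otimes> y) \<le> lenI i k y + 1" using lenI_left[OF ikk y a] .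
      have "len w = len (x \<otimes> s a) + lenI i k (s a \<otimes> y)" using h1 h2 h3 l1 lw by linarith
      hence "x \<otimes> s a \<in> A" unfolding A_def using we ya x an by auto
      hence "len x \<le> len (x \<otimes> s a)" using xmin by blast
      thus False using l1 by simp
    qed
    have IHi: "nonneg (R x (al i))" using less.hyps[OF lx x i up[OF iI]] .
    have IHk: "nonneg (R x (al k))" using less.hyps[OF lx x k(1) up[OF kI]] .
    have ysi: "y \<otimes> s i \<in> WI i k" using WI_right[OF ikk y iI] .
    have "lenI i k y < lenI i k (y \<otimes> s i)"
    proof -
      have "even (lenI i k (y \<otimes> s i)) = even (len (y \<otimes> s i))" using lenI_par[OF ikk ysi] .
      moreover have "even (lenI i k y) = even (len y)" using lenI_par[OF ikk y] .
      moreover have "even (len (y \<otimes> s i)) = odd (len y)" using len_parity_s[OF yc i] .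
      ultimately have ne: "lenI i k (y \<otimes> s i) \<noteq> lenI i k y" by auto
      have "\<not> lenI i k (y \<otimes> s i) < lenI i k y"
      proof
        assume h: "lenI i k (y \<otimes> s i) < lenI i k y"
        have "w \<otimes> s i = x \<otimes> (y \<otimes> s i)" using wxy x yc i by (simp add: m_assoc)
        hence "len (w \<otimes> s i) \<le> len x + len (y \<otimes> s i)" using len_mult x yc i by simp
        also have "\<dots> \<le> len x + lenI i k (y \<otimes> s i)" using len_le_lenI[OF ikk ysi] by simp
        finally show False using h lw lt by simp
      qed
      thus ?thesis using ne by simp
    qed
    then obtain c d where cd: "0 \<le> c" "0 \<le> d" "R y (al i) = (\<lambda>t. c * al i t + d * al k t)"
      using DP[OF ikk y] by blast
    have "R w (al i) = R x (R y (al i))" using wxy R_mult x yc by simp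
    also have "\<dots> = (\<lambda>t. c * R x (al i) t + d * R x (al k) t)" using cd R_lin[OF x] by simp
    finally show ?thesis using IHi IHk cd unfolding nonneg_def by simp
  qed
qed

lemma neg: "w \<in> carrier G \<Longrightarrow> i < n \<Longrightarrow> len (w \<otimes> s i) < len w \<Longrightarrow> \<forall>t<n. R w (al i) t \<le> 0"
proof -
  assume w: "w \<in> carrier G" and i: "i < n" and lt: "len (w \<otimes> s i) < len w"
  have ws: "w \<otimes> s i \<in> carrier G" using w i by simp
  have "len (w \<otimes> s i) < len (w \<otimes> s i \<otimes> s i)" using lt ss2 w i by simp
  hence P: "nonneg (R (w \<otimes> s i) (al i))" using pos[OF ws i] by simp
  have sX: "sig i (al i) = (\<lambda>t. - al i t)"
    unfolding sig_def using Bf_al[OF i] bb_diag[OF i] by (simp add: fun_eq_iff)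
  have "R w (al i) = R (w \<otimes> s i \<otimes> s i) (al i)" using ss2 w i by simp
  also have "\<dots> = R (w \<otimes> s i) (sig i (al i))" using R_mult[OF ws] R_s i by simp
  also have "\<dots> = (\<lambda>t. - R (w \<otimes> s i) (al i) t)" using sX R_neg[OF ws] by simp
  finally show ?thesis using P unfolding nonneg_def by simp
qed

end



context coxsys
begin

lemma R_zero: "g \<in> carrier G \<Longrightarrow> R g (\<lambda>t. 0) = (\<lambda>t. 0)"
  using R_lin[of g 0 "\<lambda>t. 0" 0 "\<lambda>t. 0"] by simp

lemma R_al_nz: "g \<in> carrier G \<Longrightarrow> i < n \<Longrightarrow> R g (al i) \<noteq> (\<lambda>t. 0)"
proof
  assume g: "g \<in> carrier G" and "R g (al i) = (\<lambda>t. 0)"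
  hence "R g (al i) = R g (\<lambda>t. 0)" using R_zero[OF g] by simp
  hence "al i = (\<lambda>t. 0)" using R_inj[OF g] by blast
  hence "al i i = 0" by simp
  thus False by (simp add: al_def)
qed

context
  fixes S :: "'b set" and \<phi> :: "'a \<Rightarrow> 'b \<Rightarrow> 'b" and v :: "nat \<Rightarrow> 'b"
  assumes act: "group_action G S \<phi>"
    and vS: "\<forall>i<n. v i \<in> S"
    and c1: "\<forall>i<n. \<forall>j<n. \<forall>k. m i j = 2 * k + 1 \<longrightarrow>
               \<phi> (word_eval G s (alt_word i j (2 * k))) (v i) = v j"
    and c2: "\<forall>i<n. \<forall>j<n. \<forall>k. m i j = 2 * k \<longrightarrow>
               \<phi> (word_eval G s (alt_word i j (2 * k - 1))) (v j) = v j"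
    and c4: "\<forall>i<n. \<phi> (s i) (v i) = v i"
begin

lemma phi_one: "x \<in> S \<Longrightarrow> \<phi> \<one> x = x"
  using group_action.id_eq_one[OF act] by (metis restrict_apply')

lemma phi_comp: "x \<in> S \<Longrightarrow> g \<in> carrier G \<Longrightarrow> h \<in> carrier G \<Longrightarrow> \<phi> (g \<otimes> h) x = \<phi> g (\<phi> h x)"
  using group_action.composition_rule[OF act] by blast

lemma Q: "w \<in> carrier G \<Longrightarrow> i < n \<Longrightarrow> j < n \<Longrightarrow> 0 < lam \<Longrightarrow> R w (al i) = (\<lambda>t. lam * al j t) \<Longrightarrow>
   \<phi> w (v i) = v j"
proof (induction "len w" arbitrary: w i j lam rule: less_induct)
  case less
  note w = less.prems(1) and i = less.prems(2) and j = less.prems(3) and lp = less.prems(4)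
    and Rw = less.prems(5)
  show ?case
  proof (cases "len w = 0")
    case True
    hence w1: "w = \<one>" using len0 w by blast
    hence "al i = (\<lambda>t. lam * al j t)" using Rw R_one by simp
    hence "al i i = lam * al j i" by metis
    hence "i = j" using lp by (auto simp: al_def split: if_splits)
    thus ?thesis using w1 phi_one vS i by simp
  next
    case False
    then obtain k where k: "k < n" "len (w \<otimes> s k) < len w" using desc w by blast
    have jpos: "0 < R w (al i) j" using Rw lp by (simp add: al_def)
    have lt: "len w < len (w \<otimes> s i)"
    proof (rule ccontr)
      assume "\<not> len w < len (w \<otimes> s i)"
      hence "len (w \<otimes> s i) < len w" using len_sa[OF w i] by auto
      hence "R w (al i) j \<le> 0" using neg[OF w i] j by blast
      thus False using jpos by simp
    qed
    have ik: "i \<noteq> k" using k lt by auto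
    note ikk = i k(1) ik
    have kI: "k \<in> {i,k}" and iI: "i \<in> {i,k}" by auto
    define A where "A = {x \<in> carrier G. \<exists>u \<in> WI i k. w = x \<otimes> u}"
    have wk: "w \<otimes> s k \<in> A"
    proof -
      have "w = (w \<otimes> s k) \<otimes> s k" using ss2 w k by simp
      thus ?thesis unfolding A_def using s_WI[OF ikk kI] w k by auto
    qed
    obtain x where xA: "x \<in> A" and xmin: "\<forall>x'. x' \<in> A \<longrightarrow> len x \<le> len x'"
      using ex_has_least_nat[of "\<lambda>x. x \<in> A" "w \<otimes> s k" len] wk by blast
    obtain u where x: "x \<in> carrier G" and u: "u \<in> WI i k" and wxu: "w = x \<otimes> u"
      using xA unfolding A_def by blast
    have uc: "u \<in> carrier G" using WI_car[OF ikk u] .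
    have lx: "len x < len w" using xmin wk k by fastforce
    have up: "len x < len (x \<otimes> s a)" if a: "a \<in> {i,k}" for a
    proof (rule ccontr)
      assume nh: "\<not> len x < len (x \<otimes> s a)"
      have an: "a < n" using a ikk by auto
      hence l1: "len x = Suc (len (x \<otimes> s a))" using len_sa[OF x an] nh by auto
      have ua: "s a \<otimes> u \<in> WI i k" using WI_left[OF ikk u a] .
      have we: "w = (x \<otimes> s a) \<otimes> (s a \<otimes> u)" using wxu x uc an by (simp add: m_assoc ss3)
      hence "x \<otimes> s a \<in> A" unfolding A_def using ua x an by auto
      hence "len x \<le> len (x \<otimes> s a)" using xmin by blast
      thus False using l1 by simp
    qed
    define X where "X = R x (al i)"
    define Y where "Y = R x (al k)"
    have PX: "nonneg X" unfolding X_def using pos[OF x i up[OF iI]] .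
    have PY: "nonneg Y" unfolding Y_def using pos[OF x k(1) up[OF kI]] .
    obtain c d where cd: "R u (al i) = (\<lambda>t. c * al i t + d * al k t)"
      and cases: "(c \<le> 0 \<and> d \<le> 0) \<or> (0 < c \<and> 0 < d) \<or>
      (c = 1 \<and> d = 0 \<and> (u = \<one> \<or> (even (m i k) \<and> u = word_eval G s (alt_word k i (m i k - 1))))) \<or>
      (c = 0 \<and> d = 1 \<and> odd (m i k) \<and> u = word_eval G s (alt_word i k (m i k - 1)))"
      using Dclass[OF ikk u] by blast
    have "R w (al i) = R x (R u (al i))" using wxu R_mult x uc by simp
    also have "\<dots> = (\<lambda>t. c * X t + d * Y t)" using cd R_lin[OF x] X_def Y_def by simp
    finally have e: "(\<lambda>t. c * X t + d * Y t) = (\<lambda>t. lam * al j t)" using Rw by simp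
    hence et: "c * X t + d * Y t = lam * al j t" for t by metis
    have phiw: "\<phi> w (v i) = \<phi> x (\<phi> u (v i))" using phi_comp vS i x uc wxu by simp
    have M: "2 \<le> m i k" using m_ge2 ikk by blast
    have mki: "m k i = m i k" using m_sym ikk by simp
    consider "c \<le> 0 \<and> d \<le> 0" | "0 < c \<and> 0 < d" |
      "c = 1 \<and> d = 0 \<and> (u = \<one> \<or> (even (m i k) \<and> u = word_eval G s (alt_word k i (m i k - 1))))" |
      "c = 0 \<and> d = 1 \<and> odd (m i k) \<and> u = word_eval G s (alt_word i k (m i k - 1))"
      using cases by blast
    thus ?thesis
    proof cases
      case 1
      have "0 \<le> X j" "0 \<le> Y j" using PX PY j unfolding nonneg_def by auto
      hence "c * X j + d * Y j \<le> 0" using 1 by (simp add: mult_nonpos_nonneg add_nonpos_nonpos)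
      thus ?thesis using et[of j] lp by (simp add: al_def)
    next
      case 2
      have z: "X t = 0 \<and> Y t = 0" if "t \<noteq> j" for t
      proof (cases "t < n")
        case True
        have "0 \<le> X t" "0 \<le> Y t" using PX PY True unfolding nonneg_def by auto
        moreover have "c * X t + d * Y t = 0" using et[of t] that by (simp add: al_def)
        ultimately show ?thesis using 2
          by (smt (verit) mult_nonneg_nonneg mult_pos_pos zero_less_mult_iff)
      next
        case False
        thus ?thesis unfolding X_def Y_def using R_supp[OF x] ikk by (simp add: al_def)
      qed
      have Xe: "X = (\<lambda>t. X j * al j t)" using z by (auto simp: fun_eq_iff al_def)
      have Ye: "Y = (\<lambda>t. Y j * al j t)" using z by (auto simp: fun_eq_iff al_def)
      have Xj: "X j \<noteq> 0" using R_al_nz[OF x i] Xe X_def by force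
      have "R x (\<lambda>t. Y j * al i t + (- X j) * al k t) = (\<lambda>t. Y j * X t + (- X j) * Y t)"
        unfolding X_def Y_def by (rule R_lin[OF x])
      also have "\<dots> = (\<lambda>t. 0)" by (subst Xe, subst Ye) (simp add: algebra_simps)
      also have "\<dots> = R x (\<lambda>t. 0)" using R_zero[OF x] by simp
      finally have "(\<lambda>t. Y j * al i t + (- X j) * al k t) = (\<lambda>t. 0)" using R_inj[OF x] by blast
      hence "Y j * al i k + (- X j) * al k k = 0" by metis
      thus ?thesis using Xj ik by (simp add: al_def)
    next
      case 3
      hence "X = (\<lambda>t. lam * al j t)" using e by simp
      hence IH: "\<phi> x (v i) = v j" using less.hyps[OF lx x i j lp] X_def by simp
      have "\<phi> u (v i) = v i"
      proof (cases "u = \<one>")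
        case True thus ?thesis using phi_one vS i by simp
      next
        case False
        hence ev: "even (m i k)" and ue: "u = word_eval G s (alt_word k i (m i k - 1))" using 3 by auto
        have "m k i = 2 * (m i k div 2)" using ev mki by simp
        hence "\<phi> (word_eval G s (alt_word k i (2 * (m i k div 2) - 1))) (v i) = v i"
          using c2 k(1) i by blast
        thus ?thesis using ue ev by simp
      qed
      thus ?thesis using phiw IH by simp
    next
      case 4
      hence "Y = (\<lambda>t. lam * al j t)" using e by simp
      hence IH: "\<phi> x (v k) = v j" using less.hyps[OF lx x k(1) j lp] Y_def by simp
      have od: "odd (m i k)" and ue: "u = word_eval G s (alt_word i k (m i k - 1))" using 4 by auto
      have "m i k = 2 * (m i k div 2) + 1" using od by simp
      hence "\<phi> (word_eval G s (alt_word i k (2 * (m i k div 2)))) (v i) = v k"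
        using c1 k(1) i by blast
      hence "\<phi> u (v i) = v k" using ue od by (simp add: odd_two_times_div_two_nat)
      thus ?thesis using phiw IH by simp
    qed
  qed
qed

lemma main: "\<forall>w \<in> carrier G. \<forall>i<n. \<forall>j<n.
           w \<otimes> s i \<otimes> inv w = s j \<longrightarrow> \<phi> w (v i) = v j"
proof (intro ballI allI impI)
  fix w i j assume w: "w \<in> carrier G" and i: "i < n" and j: "j < n" and e: "w \<otimes> s i \<otimes> inv w = s j"
  have comm: "w \<otimes> s i = s j \<otimes> w"
  proof -
    have "w \<otimes> s i = w \<otimes> s i \<otimes> inv w \<otimes> w" using w i by (simp add: m_assoc)
    thus ?thesis using e by simp
  qed
  define Y where "Y = R w (al i)"
  have sX: "sig i (al i) = (\<lambda>t. - al i t)"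
    unfolding sig_def using Bf_al[OF i] bb_diag[OF i] by (simp add: fun_eq_iff)
  have "(\<lambda>t. - Y t) = R w (sig i (al i))" using sX R_neg[OF w] Y_def by simp
  also have "\<dots> = R (w \<otimes> s i) (al i)" using R_mult[OF w] R_s i by simp
  also have "\<dots> = sig j Y" using comm R_mult[OF _ w] R_s j Y_def by simp
  finally have "(\<lambda>t. - Y t) = (\<lambda>t. Y t - 2 * Bf j Y * al j t)" unfolding sig_def .
  hence Ye: "Y = (\<lambda>t. Bf j Y * al j t)" by (auto simp: fun_eq_iff dest: fun_cong)
  define lam where "lam = Bf j Y"
  have Ye: "R w (al i) = (\<lambda>t. lam * al j t)" using Ye Y_def lam_def by simp
  have lnz: "lam \<noteq> 0" using R_al_nz[OF w i] Ye by auto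
  have Yj: "R w (al i) j = lam" using Ye by (simp add: al_def)
  show "\<phi> w (v i) = v j"
  proof (cases "len w < len (w \<otimes> s i)")
    case True
    have "0 \<le> lam" using pos[OF w i True] j Yj unfolding nonneg_def by auto
    hence "0 < lam" using lnz by simp
    thus ?thesis using Q[OF w i j _ Ye] by simp
  next
    case False
    hence "len (w \<otimes> s i) < len w" using len_sa[OF w i] by auto
    hence "lam \<le> 0" using neg[OF w i] j Yj by auto
    hence lp: "0 < - lam" using lnz by simp
    have sw: "s j \<otimes> w \<in> carrier G" using w j by simp
    have "R (s j \<otimes> w) (al i) = sig j (\<lambda>t. lam * al j t)" using R_mult[OF _ w] R_s j Ye by simp
    also have "\<dots> = (\<lambda>t. (- lam) * al j t)"
      unfolding sig_def using Bf_lin[of j lam "al j" 0 "al j"] Bf_al[OF j] bb_diag[OF j]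
      by (auto simp: fun_eq_iff al_def)
    finally have "\<phi> (s j \<otimes> w) (v i) = v j" using Q[OF sw i j lp] by simp
    moreover have "\<phi> w (v i) = \<phi> (s j) (\<phi> (s j \<otimes> w) (v i))"
      using phi_comp[of "v i" "s j" "s j \<otimes> w"] vS i j w by (simp add: ss3)
    ultimately show ?thesis using c4 j by simp
  qed
qed

end
end

theorem lemma8p1:
  fixes G :: "('a, 'c) monoid_scheme" and n :: nat and m :: "nat \<Rightarrow> nat \<Rightarrow> nat"
    and s :: "nat \<Rightarrow> 'a" and S :: "'b set" and \<phi> :: "'a \<Rightarrow> 'b \<Rightarrow> 'b" and v :: "nat \<Rightarrow> 'b"
  assumes cox: "coxeter_system G n m s"
    and fin: "finite (carrier G)"
    and act: "group_action G S \<phi>"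
    and vS: "\<forall>i<n. v i \<in> S"
    and c1: "\<forall>i<n. \<forall>j<n. \<forall>k. m i j = 2 * k + 1 \<longrightarrow>
               \<phi> (word_eval G s (alt_word i j (2 * k))) (v i) = v j"
    and c2: "\<forall>i<n. \<forall>j<n. \<forall>k. m i j = 2 * k \<longrightarrow>
               \<phi> (word_eval G s (alt_word i j (2 * k - 1))) (v j) = v j"
    and c3: "\<forall>i<n. \<forall>j<n. m i j = 2 \<longrightarrow> \<phi> (s i) (v j) = v j"
    and c4: "\<forall>i<n. \<phi> (s i) (v i) = v i"
  shows "\<forall>w \<in> carrier G. \<forall>i<n. \<forall>j<n.
           w \<otimes>\<^bsub>G\<^esub> s i \<otimes>\<^bsub>G\<^esub> inv\<^bsub>G\<^esub> w = s j \<longrightarrow> \<phi> w (v i) = v j"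
proof -
  interpret coxsys G n m s by (rule coxsys.intro[OF cox])
  show ?thesis using main[OF act vS c1 c2 c4] .
qed

end
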